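(* Let $A$ and $G$ be $3$-connected cubic graphs. Then every graph $G\circ A^-$ is $3$-connected.
   Context: Let $G$ and $A$ be $3$-regular graphs, let $a$ be a vertex of $A$ and $A^-=A-a$. A graph $G\circ A^-$ is any graph obtained by replacing each vertex $v$ of $G$ by a copy $A^-_v$ of $A^-$ and, for each edge $uv$ of $G$, adding an edge joining a vertex of degree $2$ of $A^-_u$ to a vertex of degree $2$ of $A^-_v$, so that each degree-$2$ vertex of each copy is incident with exactly one added edge (the choices of $a$ and of these edges are arbitrary). *)

theory Defs
  imports Main
begin

definition sgraph :: "'v set \<Rightarrow> ('v \<Rightarrow> 'v \<Rightarrow> bool) \<Rightarrow> bool" where
  "sgraph V E \<longleftrightarrow> finite V \<and> (\<forall>x y. E x y \<longrightarrow> x \<in> V \<and> y \<in> V \<and> x \<noteq> y \<and> E y x)"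

definition nbrs :: "'v set \<Rightarrow> ('v \<Rightarrow> 'v \<Rightarrow> bool) \<Rightarrow> 'v \<Rightarrow> 'v set" where
  "nbrs V E v = {u \<in> V. E v u}"

definition cubic :: "'v set \<Rightarrow> ('v \<Rightarrow> 'v \<Rightarrow> bool) \<Rightarrow> bool" where
  "cubic V E \<longleftrightarrow> sgraph V E \<and> (\<forall>v \<in> V. card (nbrs V E v) = 3)"

definition gconnected :: "'v set \<Rightarrow> ('v \<Rightarrow> 'v \<Rightarrow> bool) \<Rightarrow> bool" where
  "gconnected V E \<longleftrightarrow> V \<noteq> {} \<and>
     (\<forall>x \<in> V. \<forall>y \<in> V. (x, y) \<in> {(u, w). u \<in> V \<and> w \<in> V \<and> E u w}\<^sup>*)"

definition k_connected :: "nat \<Rightarrow> 'v set \<Rightarrow> ('v \<Rightarrow> 'v \<Rightarrow> bool) \<Rightarrow> bool" where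
  "k_connected k V E \<longleftrightarrow> sgraph V E \<and> k < card V \<and>
     (\<forall>S \<subseteq> V. card S < k \<longrightarrow> gconnected (V - S) E)"

text \<open>The graph G \<circ> A^-: vertex (u,x) is vertex x of the copy A^-_u.
  p u v is the degree-2 vertex (a neighbour of a in A) of the copy A^-_u
  that is joined to the copy A^-_v for the edge uv of G.\<close>
definition comp_vertices :: "'g set \<Rightarrow> 'a set \<Rightarrow> 'a \<Rightarrow> ('g \<times> 'a) set" where
  "comp_vertices VG VA a = VG \<times> (VA - {a})"

definition comp_edges ::
  "'g set \<Rightarrow> ('g \<Rightarrow> 'g \<Rightarrow> bool) \<Rightarrow> ('a \<Rightarrow> 'a \<Rightarrow> bool) \<Rightarrow> 'a \<Rightarrow> ('g \<Rightarrow> 'g \<Rightarrow> 'a)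
     \<Rightarrow> ('g \<times> 'a) \<Rightarrow> ('g \<times> 'a) \<Rightarrow> bool" where
  "comp_edges VG EG EA a p = (\<lambda>(u, x) (v, y).
      (u = v \<and> u \<in> VG \<and> x \<noteq> a \<and> y \<noteq> a \<and> EA x y) \<or>
      (EG u v \<and> x = p u v \<and> y = p v u))"

text \<open>Admissible choice of the added edges: at every copy, the edges of G at u
  are matched bijectively with the degree-2 vertices of A^-_u (the neighbours of a),
  so each such vertex lies on exactly one added edge.\<close>
definition valid_ports ::
  "'g set \<Rightarrow> ('g \<Rightarrow> 'g \<Rightarrow> bool) \<Rightarrow> 'a set \<Rightarrow> ('a \<Rightarrow> 'a \<Rightarrow> bool) \<Rightarrow> 'a \<Rightarrow> ('g \<Rightarrow> 'g \<Rightarrow> 'a) \<Rightarrow> bool" where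
  "valid_ports VG EG VA EA a p \<longleftrightarrow>
     (\<forall>u \<in> VG. bij_betw (p u) (nbrs VG EG u) (nbrs VA EA a))"

end

theory Submission
  imports Defs
begin

lemma sgraph_edge: "sgraph V E \<Longrightarrow> E x y \<Longrightarrow> x \<in> V \<and> y \<in> V \<and> x \<noteq> y \<and> E y x"
  by (simp add: sgraph_def)

lemma path_to_a:
  assumes "(x, a) \<in> {(s,t). s \<in> W \<and> t \<in> W \<and> EA s t}\<^sup>*"
  shows "x \<noteq> a \<longrightarrow> (\<exists>y. EA y a \<and> y \<in> W \<and>
           (x, y) \<in> {(s,t). s \<in> W - {a} \<and> t \<in> W - {a} \<and> EA s t}\<^sup>*)"
  using assms
proof (induction rule: converse_rtrancl_induct)
  case base
  then show ?case by simp
next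
  case (step z z')
  show ?case
  proof
    assume za: "z \<noteq> a"
    show "\<exists>y. EA y a \<and> y \<in> W \<and>
           (z, y) \<in> {(s,t). s \<in> W - {a} \<and> t \<in> W - {a} \<and> EA s t}\<^sup>*"
    proof (cases "z' = a")
      case True
      with step.hyps(1) show ?thesis by auto
    next
      case False
      with step.IH obtain y where y: "EA y a" "y \<in> W"
        "(z', y) \<in> {(s,t). s \<in> W - {a} \<and> t \<in> W - {a} \<and> EA s t}\<^sup>*" by blast
      have "(z, z') \<in> {(s,t). s \<in> W - {a} \<and> t \<in> W - {a} \<and> EA s t}"
        using step.hyps(1) False za by auto
      with y show ?thesis by (meson converse_rtrancl_into_rtrancl)
    qed
  qed
qed

lemma lift:
  assumes "(x,y) \<in> {(s,t). s \<in> W \<and> t \<in> W \<and> EA s t}\<^sup>*" "u \<in> VG"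
    "\<forall>z\<in>W. z \<in> VA - {a} \<and> (u,z) \<notin> S"
  shows "((u,x),(u,y)) \<in> {(s,t). s \<in> comp_vertices VG VA a - S \<and> t \<in> comp_vertices VG VA a - S
            \<and> comp_edges VG EG EA a p s t}\<^sup>*"
  using assms(1)
proof (induction rule: rtrancl_induct)
  case base
  show ?case by simp
next
  case (step y z)
  have "((u,y),(u,z)) \<in> {(s,t). s \<in> comp_vertices VG VA a - S \<and> t \<in> comp_vertices VG VA a - S
            \<and> comp_edges VG EG EA a p s t}"
    using step.hyps(2) assms(2,3) by (auto simp: comp_vertices_def comp_edges_def)
  then show ?case using step.IH by (meson rtrancl.rtrancl_into_rtrancl)
qed

theorem proposition5p18:
  fixes VG :: "'g set" and EG :: "'g \<Rightarrow> 'g \<Rightarrow> bool"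
    and VA :: "'a set" and EA :: "'a \<Rightarrow> 'a \<Rightarrow> bool"
    and a :: 'a and p :: "'g \<Rightarrow> 'g \<Rightarrow> 'a"
  assumes "cubic VG EG" and "k_connected 3 VG EG"
    and "cubic VA EA" and "k_connected 3 VA EA"
    and "a \<in> VA"
    and "valid_ports VG EG VA EA a p"
  shows "k_connected 3 (comp_vertices VG VA a) (comp_edges VG EG EA a p)"
proof -
  let ?VH = "comp_vertices VG VA a" and ?EH = "comp_edges VG EG EA a p"
  have sgG: "sgraph VG EG" and degG: "\<forall>v\<in>VG. card (nbrs VG EG v) = 3"
    using assms(1) by (auto simp: cubic_def)
  have sgA: "sgraph VA EA"
    using assms(3) by (auto simp: cubic_def)
  have conG: "\<And>S. S \<subseteq> VG \<Longrightarrow> card S < 3 \<Longrightarrow> gconnected (VG - S) EG"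
    and cardG: "3 < card VG" using assms(2) by (auto simp: k_connected_def)
  have conA: "\<And>S. S \<subseteq> VA \<Longrightarrow> card S < 3 \<Longrightarrow> gconnected (VA - S) EA"
    and cardA: "3 < card VA" using assms(4) by (auto simp: k_connected_def)
  have finG: "finite VG" and finA: "finite VA" using sgG sgA by (auto simp: sgraph_def)
  have bij: "\<And>u. u \<in> VG \<Longrightarrow> bij_betw (p u) (nbrs VG EG u) (nbrs VA EA a)"
    using assms(6) by (auto simp: valid_ports_def)
  have port: "\<And>u w. u \<in> VG \<Longrightarrow> EG u w \<Longrightarrow> p u w \<in> VA \<and> p u w \<noteq> a \<and> EA a (p u w)"
  proof -
    fix u w assume u: "u \<in> VG" and e: "EG u w"
    have "w \<in> nbrs VG EG u" using e sgG by (auto simp: nbrs_def sgraph_def)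
    then have "p u w \<in> nbrs VA EA a" using bij[OF u] by (meson bij_betw_apply)
    then show "p u w \<in> VA \<and> p u w \<noteq> a \<and> EA a (p u w)"
      using sgA by (auto simp: nbrs_def sgraph_def)
  qed
  have finH: "finite ?VH" using finG finA by (simp add: comp_vertices_def)
  have edgH: "x \<in> ?VH \<and> y \<in> ?VH \<and> x \<noteq> y \<and> ?EH y x" if e: "?EH x y" for x y
  proof -
    obtain u x' where x: "x = (u,x')" by (cases x)
    obtain v y' where y: "y = (v,y')" by (cases y)
    show "x \<in> ?VH \<and> y \<in> ?VH \<and> x \<noteq> y \<and> ?EH y x"
    proof (cases "u = v \<and> u \<in> VG \<and> x' \<noteq> a \<and> y' \<noteq> a \<and> EA x' y'")
      case True
      then show ?thesis using sgA x y
        by (auto simp: comp_vertices_def comp_edges_def sgraph_def)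
    next
      case False
      then have "EG u v \<and> x' = p u v \<and> y' = p v u" using e x y by (auto simp: comp_edges_def)
      moreover have "EG v u" "u \<in> VG" "v \<in> VG" "u \<noteq> v" using calculation sgG
        by (auto simp: sgraph_def)
      ultimately show ?thesis using port x y
        by (auto simp: comp_vertices_def comp_edges_def)
    qed
  qed
  have sgH: "sgraph ?VH ?EH" using finH edgH unfolding sgraph_def by blast
  have cardH: "3 < card ?VH"
  proof -
    have "card (VA - {a}) \<ge> 3" using cardA assms(5) finA by simp
    moreover have "card VG \<ge> 4" using cardG by simp
    ultimately have "card VG * card (VA - {a}) \<ge> 4 * 3" by (meson mult_le_mono)
    then show ?thesis by (simp add: comp_vertices_def card_cartesian_product)
  qed
  have conn: "gconnected (?VH - S) ?EH" if S: "S \<subseteq> ?VH" "card S < 3" for S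
  proof -
    define T where "T = fst ` S"
    define Su where "Su u = {z. (u,z) \<in> S}" for u
    define R where "R = {(s,t). s \<in> ?VH - S \<and> t \<in> ?VH - S \<and> ?EH s t}"
    have finS: "finite S" using finite_subset[OF S(1) finH] .
    have cardT: "card T \<le> 2" unfolding T_def using card_image_le[OF finS, of fst] S(2) by linarith
    have TV: "T \<subseteq> VG" using S(1) by (auto simp: T_def comp_vertices_def)
    have notT: "\<And>u z. u \<notin> T \<Longrightarrow> (u,z) \<notin> S" by (force simp: T_def)
    have SuV: "\<And>u. Su u \<subseteq> VA - {a}" using S(1) by (auto simp: Su_def comp_vertices_def)
    have finSu: "\<And>u. finite (Su u)" using SuV finA by (meson finite_Diff rev_finite_subset)
    have cardSu: "\<And>u. card (Su u) \<le> card S"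
    proof -
      fix u
      have "(\<lambda>z. (u,z)) ` Su u \<subseteq> S" by (auto simp: Su_def)
      then have "card ((\<lambda>z. (u,z)) ` Su u) \<le> card S" using finS by (simp add: card_mono)
      moreover have "card ((\<lambda>z. (u,z)) ` Su u) = card (Su u)"
        by (rule card_image) (auto simp: inj_on_def)
      ultimately show "card (Su u) \<le> card S" by simp
    qed
    have gcT: "gconnected (VG - T) EG" using conG[OF TV] cardT by simp
    obtain g0 where g0: "g0 \<in> VG" "g0 \<notin> T"
    proof -
      have "finite T" using finS by (simp add: T_def)
      then have "VG \<subseteq> T \<Longrightarrow> card VG \<le> card T" by (rule card_mono)
      then have "\<not> VG \<subseteq> T" using cardT cardG by linarith
      then show ?thesis using that by blast
    qed
    obtain z0 where z0: "z0 \<in> VA - {a}"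
    proof -
      have "card (VA - {a}) \<ge> 3" using cardA assms(5) finA by simp
      then have "VA - {a} \<noteq> {}" by (metis card.empty not_numeral_le_zero)
      then show ?thesis using that by blast
    qed
    have Rsym: "\<And>x y. (x,y) \<in> R \<Longrightarrow> (y,x) \<in> R"
      using sgH by (auto simp: R_def sgraph_def)
    have gcA1: "gconnected (VA - {a}) EA" using conA[of "{a}"] assms(5) by simp
    have good_copy: "((u,x),(u,y)) \<in> R\<^sup>*"
      if "u \<in> VG" "u \<notin> T" "x \<in> VA - {a}" "y \<in> VA - {a}" for u x y
    proof -
      have "(x,y) \<in> {(s,t). s \<in> VA - {a} \<and> t \<in> VA - {a} \<and> EA s t}\<^sup>*"
        using gcA1 that unfolding gconnected_def by blast
      then show ?thesis unfolding R_def
        by (rule lift) (use that notT in auto)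
    qed
    have good_all: "\<forall>x. x \<in> VA - {a} \<longrightarrow> ((u,x),(g0,z0)) \<in> R\<^sup>*"
      if "(u, g0) \<in> {(s,t). s \<in> VG - T \<and> t \<in> VG - T \<and> EG s t}\<^sup>*" for u
      using that
    proof (induction rule: converse_rtrancl_induct)
      case base
      then show ?case using good_copy g0 z0 by blast
    next
      case (step u v)
      show ?case
      proof (intro allI impI)
        fix x assume x: "x \<in> VA - {a}"
        have uv: "u \<in> VG" "u \<notin> T" "v \<in> VG" "v \<notin> T" "EG u v" using step.hyps(1) by auto
        have vu: "EG v u" using sgraph_edge[OF sgG uv(5)] by simp
        have p1: "p u v \<in> VA - {a}" "p v u \<in> VA - {a}" using port uv vu by auto
        have "((u,x),(u,p u v)) \<in> R\<^sup>*" using good_copy uv x p1 by blast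
        moreover have "((u,p u v),(v,p v u)) \<in> R"
          using uv p1 notT by (auto simp: R_def comp_vertices_def comp_edges_def)
        moreover have "((v,p v u),(g0,z0)) \<in> R\<^sup>*" using step.IH p1 by blast
        ultimately show "((u,x),(g0,z0)) \<in> R\<^sup>*"
          by (meson rtrancl_into_rtrancl rtrancl_trans)
      qed
    qed
    have good: "((u,x),(g0,z0)) \<in> R\<^sup>*" if "u \<in> VG" "u \<notin> T" "x \<in> VA - {a}" for u x
    proof -
      have "(u, g0) \<in> {(s,t). s \<in> VG - T \<and> t \<in> VG - T \<and> EG s t}\<^sup>*"
        using gcT that g0 unfolding gconnected_def by blast
      then show ?thesis using good_all that by blast
    qed
    have bad: "\<exists>w y. w \<in> VG \<and> w \<notin> T \<and> y \<in> VA - {a} \<and> ((u,x),(w,y)) \<in> R\<^sup>*"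
      if u: "u \<in> T" and x: "x \<in> VA - {a}" "(u,x) \<notin> S" for u x
    proof -
      have uV: "u \<in> VG" using u TV by auto
      have xSu: "x \<notin> Su u" using x by (simp add: Su_def)
      show ?thesis
      proof (cases "card (Su u) \<ge> 2")
        case True
        have Tu: "T \<subseteq> {u}"
        proof
          fix w assume w: "w \<in> T"
          show "w \<in> {u}"
          proof (rule ccontr)
            assume wu: "w \<notin> {u}"
            obtain z where wz: "(w,z) \<in> S" using w by (auto simp: T_def)
            have sub: "insert (w,z) ((\<lambda>z. (u,z)) ` Su u) \<subseteq> S" using wz by (auto simp: Su_def)
            have "card ((\<lambda>z. (u,z)) ` Su u) = card (Su u)"
              by (rule card_image) (auto simp: inj_on_def)
            moreover have "(w,z) \<notin> (\<lambda>z. (u,z)) ` Su u" using wu by auto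
            ultimately have "card (insert (w,z) ((\<lambda>z. (u,z)) ` Su u)) = card (Su u) + 1"
              using finSu by simp
            then have "card S \<ge> card (Su u) + 1" using card_mono[OF finS sub] by simp
            then show False using True S(2) by simp
          qed
        qed
        have c: "card (Su u) < 3" using cardSu[of u] S(2) by simp
        have gc: "gconnected (VA - Su u) EA" using conA[of "Su u"] SuV c by auto
        have xa: "(x, a) \<in> {(s,t). s \<in> VA - Su u \<and> t \<in> VA - Su u \<and> EA s t}\<^sup>*"
          using gc x xSu assms(5) SuV unfolding gconnected_def by blast
        obtain y where y: "EA y a" "y \<in> VA - Su u"
          "(x, y) \<in> {(s,t). s \<in> VA - Su u - {a} \<and> t \<in> VA - Su u - {a} \<and> EA s t}\<^sup>*"
          using path_to_a[OF xa] x by auto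
        have yV: "y \<in> VA" "EA a y" using sgraph_edge[OF sgA y(1)] by simp_all
        then have "y \<in> nbrs VA EA a" by (simp add: nbrs_def)
        moreover have "p u ` nbrs VG EG u = nbrs VA EA a" using bij[OF uV] by (rule bij_betw_imp_surj_on)
        ultimately have "y \<in> p u ` nbrs VG EG u" by simp
        then obtain w where w0: "w \<in> nbrs VG EG u" "y = p u w" by (rule imageE)
        then have w: "w \<in> nbrs VG EG u" "p u w = y" by simp_all
        have wG: "EG u w" "w \<in> VG" using w by (auto simp: nbrs_def)
        have "w \<noteq> u" using sgraph_edge[OF sgG wG(1)] by auto
        note wG = wG this
        have wT: "w \<notin> T" using Tu wG by auto
        have "EG w u" using sgraph_edge[OF sgG wG(1)] by simp
        then have pw: "p w u \<in> VA - {a}" using port[OF wG(2)] by blast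
        have ya: "y \<noteq> a" using sgraph_edge[OF sgA y(1)] by simp
        have "((u,x),(u,y)) \<in> R\<^sup>*" unfolding R_def
          by (rule lift[OF y(3) uV]) (auto simp: Su_def)
        moreover have "((u,y),(w,p w u)) \<in> R"
          using uV wG wT pw y ya w notT by (auto simp: R_def comp_vertices_def comp_edges_def Su_def)
        ultimately have "((u,x),(w,p w u)) \<in> R\<^sup>*" by (rule rtrancl.rtrancl_into_rtrancl)
        then show ?thesis using wG wT pw by blast
      next
        case False
        then have c1: "card (Su u) \<le> 1" by simp
        obtain z where z: "(u,z) \<in> S" using u by (auto simp: T_def)
        have "T - {u} \<subseteq> fst ` (S - {(u,z)})" by (auto simp: T_def)
        moreover have "card (fst ` (S - {(u,z)})) \<le> 1"
          using card_image_le[of "S - {(u,z)}" fst] finS z S(2) by simp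
        ultimately have cTu: "card (T - {u}) \<le> 1"
          using card_mono[of "fst ` (S - {(u,z)})" "T - {u}"] finS by simp
        define B where "B = {w \<in> nbrs VG EG u. p u w \<in> Su u}"
        have inj: "inj_on (p u) B"
          by (rule inj_on_subset[OF bij_betw_imp_inj_on[OF bij[OF uV]]]) (auto simp: B_def)
        have "card B \<le> card (Su u)"
          by (rule card_inj_on_le[OF inj]) (auto simp: B_def finSu)
        then have cB: "card B \<le> 1" using c1 by simp
        have finB: "finite B" using finG by (simp add: B_def nbrs_def)
        have finT: "finite (T - {u})" using finS by (simp add: T_def)
        have "card ((T - {u}) \<union> B) \<le> 2" using card_Un_le[of "T - {u}" B] cB cTu by simp
        moreover have "card (nbrs VG EG u) = 3" using degG uV by simp
        have "\<not> nbrs VG EG u \<subseteq> (T - {u}) \<union> B"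
        proof
          assume "nbrs VG EG u \<subseteq> (T - {u}) \<union> B"
          then have "card (nbrs VG EG u) \<le> card ((T - {u}) \<union> B)"
            using finB finT by (intro card_mono) simp_all
          then show False using \<open>card ((T - {u}) \<union> B) \<le> 2\<close> \<open>card (nbrs VG EG u) = 3\<close> by linarith
        qed
        then obtain w where w: "w \<in> nbrs VG EG u" "w \<notin> T - {u}" "w \<notin> B" by blast
        have wG: "EG u w" "w \<in> VG" "w \<noteq> u" using w sgraph_edge[OF sgG, of u w] by (auto simp: nbrs_def)
        have wT: "w \<notin> T" using w wG by auto
        have pSu: "p u w \<notin> Su u" using w by (auto simp: B_def)
        have pu: "p u w \<in> VA - {a}" using port uV wG by auto
        have "EG w u" using sgraph_edge[OF sgG wG(1)] by simp
        then have pw: "p w u \<in> VA - {a}" using port[OF wG(2)] by blast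
        have "card (insert a (Su u)) \<le> 2"
          using card_insert_le_m1[of 3 "Su u" a] c1 finSu
          by (simp add: card_insert_if)
        then have gc: "gconnected (VA - insert a (Su u)) EA"
          using conA[of "insert a (Su u)"] SuV assms(5) by auto
        have "(x, p u w) \<in> {(s,t). s \<in> VA - insert a (Su u) \<and> t \<in> VA - insert a (Su u) \<and> EA s t}\<^sup>*"
          using gc x xSu pSu pu unfolding gconnected_def by blast
        then have P1: "((u,x),(u,p u w)) \<in> R\<^sup>*" unfolding R_def
          by (rule lift[OF _ uV]) (auto simp: Su_def)
        have P2: "((u,p u w),(w,p w u)) \<in> R"
          using uV wG wT pw pu pSu notT by (auto simp: R_def comp_vertices_def comp_edges_def Su_def)
        from P1 P2 have "((u,x),(w,p w u)) \<in> R\<^sup>*" by (rule rtrancl.rtrancl_into_rtrancl)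
        then show ?thesis using wG wT pw by blast
      qed
    qed
    have all: "(v,(g0,z0)) \<in> R\<^sup>*" if v: "v \<in> ?VH - S" for v
    proof -
      obtain u x where vx: "v = (u,x)" by (cases v)
      have ux: "u \<in> VG" "x \<in> VA - {a}" "(u,x) \<notin> S" using v vx by (auto simp: comp_vertices_def)
      show ?thesis
      proof (cases "u \<in> T")
        case False
        then show ?thesis using good ux vx by blast
      next
        case True
        then obtain w y where "w \<in> VG" "w \<notin> T" "y \<in> VA - {a}" "((u,x),(w,y)) \<in> R\<^sup>*"
          using bad ux by blast
        then show ?thesis using good[of w y] vx rtrancl_trans[of "(u,x)" "(w,y)" R "(g0,z0)"] by simp
      qed
    qed
    have symR: "sym (R\<^sup>*)" by (rule sym_rtrancl) (auto simp: sym_def intro: Rsym)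
    have g0H: "(g0,z0) \<in> ?VH - S" using g0 z0 notT by (auto simp: comp_vertices_def)
    show ?thesis unfolding gconnected_def
    proof (intro conjI ballI)
      show "?VH - S \<noteq> {}" using g0H by blast
    next
      fix x y assume "x \<in> ?VH - S" "y \<in> ?VH - S"
      then have xg: "(x,(g0,z0)) \<in> R\<^sup>*" and yg: "(y,(g0,z0)) \<in> R\<^sup>*" using all by blast+
      have gy: "((g0,z0),y) \<in> R\<^sup>*" using symR yg by (rule symD)
      have "(x,y) \<in> R\<^sup>*" using rtrancl_trans[OF xg gy] .
      then show "(x,y) \<in> {(u, w). u \<in> ?VH - S \<and> w \<in> ?VH - S \<and> ?EH u w}\<^sup>*"
        unfolding R_def .
    qed
  qed
  show ?thesis using sgH cardH conn unfolding k_connected_def by blast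
qed

end
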